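(* For all $m,n\ge 3$, the state complexities of the four languages $U_m(a,b,c)\cup (U_n(a,b,c))^R$, $U_m(a,b,c)\cap (U_n(a,b,c))^R$, $U_m(a,b,c)\setminus (U_n(a,b,c))^R$ and $(U_n(a,b,c))^R\setminus U_m(a,b,c)$ are all equal to $m2^n-(m-1)$, and the state complexity of $U_m(a,b,c)\oplus (U_n(a,b,c))^R$ is $m2^n$.
   Context: The state complexity of a regular language is the number of states of its minimal complete DFA. For $n\ge 3$, $\mathcal{U}_n(a,b,c)$ is the DFA over alphabet $\{a,b,c\}$ with state set $\{0,\dots,n-1\}$, initial state $0$, final state set $\{n-1\}$, where $a$ maps $i\mapsto i+1\pmod n$; $b$ swaps states $0$ and $1$ and fixes all others; $c$ maps state $n-1$ to state $0$ and fixes all other states. $U_n(a,b,c)$ is its language. $L^R$ denotes the reversal of $L$; $\setminus$ is set difference and $\oplus$ is symmetric difference. *)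

theory Defs
  imports Main
begin

datatype sym = a | b | c

text \<open>Without loss of generality the states are
  0,...,k-1 (any finite DFA is isomorphic to one of this form).\<close>
definition is_cdfa :: "nat \<Rightarrow> (nat \<Rightarrow> sym \<Rightarrow> nat) \<Rightarrow> nat \<Rightarrow> nat set \<Rightarrow> bool" where
  "is_cdfa k \<delta> q0 F \<longleftrightarrow> q0 < k \<and> (\<forall>q<k. \<forall>s. \<delta> q s < k) \<and> F \<subseteq> {..<k}"

definition dfa_lang :: "(nat \<Rightarrow> sym \<Rightarrow> nat) \<Rightarrow> nat \<Rightarrow> nat set \<Rightarrow> sym list set" where
  "dfa_lang \<delta> q0 F = {w. foldl \<delta> q0 w \<in> F}"

definition state_complexity :: "sym list set \<Rightarrow> nat" where
  "state_complexity L = (LEAST k. \<exists>\<delta> q0 F. is_cdfa k \<delta> q0 F \<and> dfa_lang \<delta> q0 F = L)"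

definition U_delta :: "nat \<Rightarrow> nat \<Rightarrow> sym \<Rightarrow> nat" where
  "U_delta n q s = (case s of
      a \<Rightarrow> (q + 1) mod n
    | b \<Rightarrow> (if q = 0 then 1 else if q = 1 then 0 else q)
    | c \<Rightarrow> (if q = n - 1 then 0 else q))"

definition U_lang :: "nat \<Rightarrow> sym list set" where
  "U_lang n = dfa_lang (U_delta n) 0 {n - 1}"

definition lang_rev :: "sym list set \<Rightarrow> sym list set" where
  "lang_rev L = rev ` L"

end

theory Submission
  imports Defs
begin

definition quot :: "sym list set \<Rightarrow> sym list \<Rightarrow> sym list set" where
  "quot L u = {w. u @ w \<in> L}"

lemma foldl_closed:
  assumes "\<forall>q<k. \<forall>s. \<delta> q s < k" "q < k"
  shows "foldl \<delta> q w < k"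
  using assms by (induction w arbitrary: q) auto

lemma sc_lower:
  assumes "is_cdfa k \<delta> q0 F" "dfa_lang \<delta> q0 F = L"
  shows "finite (range (quot L)) \<and> card (range (quot L)) \<le> k"
proof -
  define g where "g = (\<lambda>q. {w. foldl \<delta> q w \<in> F})"
  have "quot L u = g (foldl \<delta> q0 u)" for u
    using assms(2) unfolding quot_def g_def dfa_lang_def by auto
  moreover have "foldl \<delta> q0 u < k" for u
    using assms(1) foldl_closed unfolding is_cdfa_def by blast
  ultimately have sub: "range (quot L) \<subseteq> g ` {..<k}" by auto
  have "finite (g ` {..<k})" by simp
  moreover have "card (g ` {..<k}) \<le> k" using card_image_le[of "{..<k}" g] by simp
  ultimately show ?thesis using sub by (meson card_mono finite_subset le_trans)
qed

lemma sc_upper: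
  assumes fin: "finite (range (quot L))"
  shows "\<exists>\<delta> q0 F. is_cdfa (card (range (quot L))) \<delta> q0 F \<and> dfa_lang \<delta> q0 F = L"
proof -
  define Q where "Q = range (quot L)"
  define K where "K = card Q"
  obtain h where h: "bij_betw h {0..<K} Q"
    using ex_bij_betw_nat_finite[of Q] fin unfolding Q_def K_def by blast
  define iv where "iv = the_inv_into {0..<K} h"
  have ivQ: "iv x < K" if "x \<in> Q" for x
    using h that unfolding iv_def
    by (metis atLeastLessThan_iff bij_betw_def the_inv_into_into order_refl)
  have hiv: "h (iv x) = x" if "x \<in> Q" for x
    using h that unfolding iv_def by (meson bij_betw_def f_the_inv_into_f_bij_betw)
  define deriv where "deriv = (\<lambda>(s::sym) (X::sym list set). {w. s # w \<in> X})"
  define \<delta> where "\<delta> = (\<lambda>i s. iv (deriv s (h i)))"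
  define F where "F = {i. i < K \<and> [] \<in> h i}"
  have dq: "deriv s (quot L u) = quot L (u @ [s])" for s u
    unfolding deriv_def quot_def by auto
  have inQ: "quot L u \<in> Q" for u unfolding Q_def by simp
  have run: "foldl \<delta> (iv (quot L [])) u = iv (quot L u)" for u
  proof (induction u rule: rev_induct)
    case Nil then show ?case by simp
  next
    case (snoc s u)
    have "foldl \<delta> (iv (quot L [])) (u @ [s]) = \<delta> (iv (quot L u)) s" using snoc by simp
    also have "\<dots> = iv (deriv s (quot L u))" unfolding \<delta>_def using hiv inQ by simp
    also have "\<dots> = iv (quot L (u @ [s]))" using dq by simp
    finally show ?case .
  qed
  have "is_cdfa K \<delta> (iv (quot L [])) F"
    unfolding is_cdfa_def
  proof (intro conjI allI impI)
    show "iv (quot L []) < K" using ivQ inQ by blast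
    fix q s assume "q < K"
    then have "h q \<in> Q" using h by (auto simp: bij_betw_def)
    then obtain u where "h q = quot L u" unfolding Q_def by auto
    then have "deriv s (h q) \<in> Q" using dq inQ by simp
    then show "\<delta> q s < K" unfolding \<delta>_def using ivQ by blast
  next
    show "F \<subseteq> {..<K}" unfolding F_def by auto
  qed
  moreover have "dfa_lang \<delta> (iv (quot L [])) F = L"
  proof -
    have "w \<in> dfa_lang \<delta> (iv (quot L [])) F \<longleftrightarrow> w \<in> L" for w
    proof -
      have "w \<in> dfa_lang \<delta> (iv (quot L [])) F \<longleftrightarrow> iv (quot L w) \<in> F"
        unfolding dfa_lang_def using run by simp
      also have "\<dots> \<longleftrightarrow> [] \<in> quot L w" unfolding F_def using ivQ hiv inQ by simp
      also have "\<dots> \<longleftrightarrow> w \<in> L" unfolding quot_def by simp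
      finally show ?thesis .
    qed
    then show ?thesis by blast
  qed
  ultimately show ?thesis unfolding K_def Q_def by blast
qed

lemma sc_eq:
  assumes "finite (range (quot L))"
  shows "state_complexity L = card (range (quot L))"
  unfolding state_complexity_def
proof (rule Least_equality)
  show "\<exists>\<delta> q0 F. is_cdfa (card (range (quot L))) \<delta> q0 F \<and> dfa_lang \<delta> q0 F = L"
    using sc_upper[OF assms] .
next
  fix k assume "\<exists>\<delta> q0 F. is_cdfa k \<delta> q0 F \<and> dfa_lang \<delta> q0 F = L"
  then show "card (range (quot L)) \<le> k" using sc_lower by blast
qed

locale UU =
  fixes m n :: nat
  assumes m3: "m \<ge> 3" and n3: "n \<ge> 3"
begin

abbreviation dm where "dm \<equiv> U_delta m"
abbreviation dn where "dn \<equiv> U_delta n"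

lemma dm_lt: "q < m \<Longrightarrow> dm q s < m"
  using m3 by (cases s) (auto simp: U_delta_def)
lemma dn_lt: "q < n \<Longrightarrow> dn q s < n"
  using n3 by (cases s) (auto simp: U_delta_def)

lemma fdm_lt: "q < m \<Longrightarrow> foldl dm q w < m"
  by (induction w arbitrary: q) (auto simp: dm_lt)
lemma fdn_lt: "q < n \<Longrightarrow> foldl dn q w < n"
  by (induction w arbitrary: q) (auto simp: dn_lt)

definition pstep :: "nat \<times> nat set \<Rightarrow> sym \<Rightarrow> nat \<times> nat set" where
  "pstep y s = (dm (fst y) s, {q. q < n \<and> dn q s \<in> snd y})"

lemma pfold: "S \<subseteq> {..<n} \<Longrightarrow> foldl pstep (i, S) w = (foldl dm i w, {q. q < n \<and> foldl dn q (rev w) \<in> S})"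
proof (induction w arbitrary: i S)
  case Nil then show ?case by auto
next
  case (Cons s w)
  have "foldl pstep (i, S) (s # w) = foldl pstep (dm i s, {q. q < n \<and> dn q s \<in> S}) w"
    by (simp add: pstep_def)
  also have "\<dots> = (foldl dm (dm i s) w,
       {q. q < n \<and> foldl dn q (rev w) \<in> {q. q < n \<and> dn q s \<in> S}})" using Cons(1)[of "{q. q < n \<and> dn q s \<in> S}"] by auto
  also have "{q. q < n \<and> foldl dn q (rev w) \<in> {q. q < n \<and> dn q s \<in> S}}
       = {q. q < n \<and> foldl dn q (rev (s # w)) \<in> S}"
    using fdn_lt by auto
  finally show ?case by simp
qed

definition st :: "sym list \<Rightarrow> nat \<times> nat set" where
  "st u = foldl pstep (0, {n - 1}) u"

definition Lang :: "(bool \<Rightarrow> bool \<Rightarrow> bool) \<Rightarrow> nat \<times> nat set \<Rightarrow> sym list set" where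
  "Lang op y = {w. op (fst (foldl pstep y w) = m - 1) (0 \<in> snd (foldl pstep y w))}"

definition Lop :: "(bool \<Rightarrow> bool \<Rightarrow> bool) \<Rightarrow> sym list set" where
  "Lop op = {w. op (w \<in> U_lang m) (w \<in> lang_rev (U_lang n))}"

lemma in_Urev: "w \<in> lang_rev (U_lang n) \<longleftrightarrow> foldl dn 0 (rev w) = n - 1"
proof -
  have "w \<in> rev ` X \<longleftrightarrow> rev w \<in> X" for X :: "sym list set"
    by (metis image_iff rev_rev_ident)
  then show ?thesis unfolding lang_rev_def U_lang_def dfa_lang_def by simp
qed

lemma quot_Lop: "quot (Lop op) u = Lang op (st u)"
proof -
  have "w \<in> quot (Lop op) u \<longleftrightarrow> w \<in> Lang op (st u)" for w
  proof -
    have n0: "0 < n" using n3 by simp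
    have "w \<in> quot (Lop op) u \<longleftrightarrow>
        op (foldl dm (foldl dm 0 u) w = m - 1) (foldl dn (foldl dn 0 (rev w)) (rev u) = n - 1)"
      unfolding quot_def Lop_def in_Urev by (simp add: U_lang_def dfa_lang_def)
    also have "\<dots> \<longleftrightarrow> w \<in> Lang op (st u)"
    proof -
      define S where "S = {q. q < n \<and> foldl dn q (rev u) = n - 1}"
      have S: "S \<subseteq> {..<n}" unfolding S_def by auto
      have "st u = (foldl dm 0 u, S)" unfolding st_def S_def using pfold[of "{n-1}"] n0 by simp
      then show ?thesis unfolding Lang_def using pfold[OF S] n0 fdn_lt[of 0] by (simp add: S_def)
    qed
    finally show ?thesis .
  qed
  then show ?thesis by blast
qed

end

definition sw :: "nat \<Rightarrow> nat" where "sw x = (if x = 0 then 1 else if x = 1 then 0 else x)"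

lemma sw_sw[simp]: "sw (sw x) = x" by (simp add: sw_def)
lemma sw_lt: "x < n \<Longrightarrow> 2 \<le> n \<Longrightarrow> sw x < n" by (auto simp: sw_def)

lemma mod_cancel_nat: "(x + z) mod n = (y + z) mod n \<Longrightarrow> x mod n = y mod (n::nat)"
  by (simp add: nat_mod_eq_iff)

lemma mod_mul_in: "(x + j * y) mod m = (x + j * (y mod m)) mod (m::nat)"
  by (metis mod_add_right_eq mod_mult_right_eq)

lemma three_cands:
  fixes m r x :: nat
  assumes "m \<ge> 3" "r < m" "r \<noteq> 0" "x < m"
  shows "\<exists>j \<in> {0,1,2::nat}. (x + j*r) mod m \<notin> {0,1}"
proof (cases "x \<in> {0,1}")
  case False
  then show ?thesis using assms by (intro bexI[of _ 0]) auto
next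
  case True
  then consider "x = 0" | "x = 1" by blast
  then show ?thesis
  proof cases
    case 1
    show ?thesis
    proof (cases "r = 1")
      case True then show ?thesis using assms 1 by (intro bexI[of _ 2]) auto
    next
      case False then show ?thesis using assms 1 by (intro bexI[of _ 1]) auto
    qed
  next
    case 2
    show ?thesis
    proof (cases "r = m - 1")
      case True
      have e: "1 + 2 * (m - 1) = (m - 1) + m" using assms by simp
      have "((m - 1) + m) mod m = m - 1" using assms by (simp only: mod_add_self2) simp
      then have "(1 + 2 * (m - 1)) mod m = m - 1" unfolding e .
      then show ?thesis using assms 2 True by (intro bexI[of _ 2]) auto
    next
      case False
      then have "(1 + r) mod m = 1 + r" using assms by simp
      then show ?thesis using assms 2 by (intro bexI[of _ 1]) auto
    qed
  qed
qed

context UU begin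

definition A2 :: "nat \<times> nat \<Rightarrow> nat \<times> nat" where
  "A2 s = ((fst s + 1) mod m, (snd s + (n - 1)) mod n)"
definition B2 :: "nat \<times> nat \<Rightarrow> nat \<times> nat" where
  "B2 s = (sw (fst s), sw (snd s))"
definition vp :: "nat \<times> nat \<Rightarrow> bool" where "vp s \<longleftrightarrow> fst s < m \<and> snd s < n"
definition closed2 :: "(nat \<times> nat) set \<Rightarrow> bool" where
  "closed2 X \<longleftrightarrow> (\<forall>s. vp s \<longrightarrow> s \<in> X \<longrightarrow> A2 s \<in> X \<and> B2 s \<in> X)"
definition E :: "nat \<times> nat \<Rightarrow> nat \<times> nat \<Rightarrow> bool" where
  "E s t \<longleftrightarrow> (\<forall>X. closed2 X \<longrightarrow> (s \<in> X \<longleftrightarrow> t \<in> X))"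

lemma E_refl: "E s s" by (simp add: E_def)
lemma E_sym: "E s t \<Longrightarrow> E t s" by (simp add: E_def)
lemma E_trans: "E s t \<Longrightarrow> E t u \<Longrightarrow> E s u" by (simp add: E_def)

lemma A2pow: "vp s \<Longrightarrow> (A2 ^^ k) s = ((fst s + k) mod m, (snd s + k * (n - 1)) mod n)"
proof (induction k)
  case 0 then show ?case by (simp add: vp_def)
next
  case (Suc k)
  have e: "snd s + k * (n - 1) + (n - 1) = snd s + Suc k * (n - 1)" by simp
  have "(A2 ^^ Suc k) s = A2 ((A2 ^^ k) s)" by simp
  also have "\<dots> = A2 ((fst s + k) mod m, (snd s + k * (n - 1)) mod n)"
    using Suc.IH Suc.prems by simp
  also have "\<dots> = ((fst s + Suc k) mod m, ((snd s + k * (n - 1)) mod n + (n - 1)) mod n)"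
    unfolding A2_def by (simp add: mod_simps)
  also have "((snd s + k * (n - 1)) mod n + (n - 1)) mod n = (snd s + Suc k * (n - 1)) mod n"
    by (metis e mod_add_left_eq)
  finally show ?case .
qed

lemma vp_A2: "vp s \<Longrightarrow> vp (A2 s)"
  using m3 n3 by (auto simp: vp_def A2_def)
lemma vp_B2: "vp s \<Longrightarrow> vp (B2 s)"
  using m3 n3 by (auto simp: vp_def B2_def sw_lt)
lemma vp_A2pow: "vp s \<Longrightarrow> vp ((A2 ^^ k) s)"
  by (induction k) (auto simp: vp_A2)

lemma closed2_pow: "closed2 X \<Longrightarrow> vp s \<Longrightarrow> s \<in> X \<Longrightarrow> (A2 ^^ k) s \<in> X"
proof (induction k)
  case 0 then show ?case by simp
next
  case (Suc k)
  have "vp ((A2 ^^ k) s)" using vp_A2pow Suc.prems by blast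
  then have "A2 ((A2 ^^ k) s) \<in> X" using Suc Suc.prems unfolding closed2_def by blast
  then show ?case by simp
qed

lemma A2pow_id: "vp s \<Longrightarrow> (A2 ^^ (m * n)) s = s"
proof -
  assume v: "vp s"
  have e: "m * n * (n - 1) = n * (m * (n - 1))" by simp
  have "(snd s + n * (m * (n - 1))) mod n = snd s" using v by (simp add: vp_def)
  then have "(snd s + m * n * (n - 1)) mod n = snd s" by (simp only: e)
  moreover have "(fst s + m * n) mod m = fst s" using v by (simp add: vp_def)
  ultimately show ?thesis using A2pow[OF v] by (cases s) simp
qed

lemma E_A2: assumes "vp s" shows "E s (A2 s)"
  unfolding E_def
proof (intro allI impI iffI)
  fix X assume c: "closed2 X"
  { assume "s \<in> X" then show "A2 s \<in> X" using c assms unfolding closed2_def by blast }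
  { assume a: "A2 s \<in> X"
    have "(A2 ^^ (m * n - 1)) (A2 s) \<in> X" using closed2_pow[OF c vp_A2[OF assms] a] .
    moreover have "(A2 ^^ (m * n - 1)) (A2 s) = (A2 ^^ (m * n)) s"
    proof -
      have "m * n = Suc (m * n - 1)" using m3 n3 by simp
      then show ?thesis by (metis funpow_Suc_right o_apply)
    qed
    ultimately show "s \<in> X" using A2pow_id[OF assms] by simp }
qed

lemma E_B2: assumes "vp s" shows "E s (B2 s)"
  unfolding E_def
proof (intro allI impI iffI)
  fix X assume c: "closed2 X"
  { assume "s \<in> X" then show "B2 s \<in> X" using c assms unfolding closed2_def by blast }
  { assume a: "B2 s \<in> X"
    have "B2 (B2 s) \<in> X" using c a vp_B2[OF assms] unfolding closed2_def by blast
    then show "s \<in> X" by (simp add: B2_def) }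
qed

lemma E_A2pow: "vp s \<Longrightarrow> E s ((A2 ^^ k) s)"
proof (induction k)
  case 0 then show ?case by (simp add: E_refl)
next
  case (Suc k)
  then show ?case using E_trans E_A2 vp_A2pow by fastforce
qed

lemma imove:
  assumes v: "vp (i,q)" and k1: "(i + k) mod m = 0" and k2: "(q + k * (n - 1)) mod n \<notin> {0,1}"
  shows "E (i,q) ((i + 1) mod m, q)"
proof -
  define q' where "q' = (q + k * (n - 1)) mod n"
  have q'n: "q' < n" unfolding q'_def using n3 by simp
  have 1: "(A2 ^^ k) (i,q) = (0, q')" using A2pow[OF v] k1 unfolding q'_def by simp
  have v2: "vp ((i + 1) mod m, q)" using v m3 by (simp add: vp_def)
  have "((i + 1) mod m + k) mod m = ((i + k) mod m + 1) mod m" by (simp add: mod_simps add.commute add.left_commute)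
  then have "((i + 1) mod m + k) mod m = 1" using k1 m3 by simp
  then have 2: "(A2 ^^ k) ((i + 1) mod m, q) = (1, q')" using A2pow[OF v2] unfolding q'_def by simp
  have 3: "B2 (0, q') = (1, q')" using k2 unfolding q'_def by (simp add: B2_def sw_def)
  have "E (i,q) (0,q')" using E_A2pow[OF v, of k] 1 by simp
  moreover have "E (0,q') (1,q')" using E_B2[of "(0,q')"] 3 q'n m3 by (simp add: vp_def)
  moreover have "E ((i + 1) mod m, q) (1, q')" using E_A2pow[OF v2, of k] 2 by simp
  ultimately show ?thesis using E_trans E_sym by blast
qed

lemma qmove:
  assumes v: "vp (i,q)" and k1: "(q + k * (n - 1)) mod n = 0" and k2: "(i + k) mod m \<notin> {0,1}"
  shows "E (i,q) (i, (q + 1) mod n)"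
proof -
  define i' where "i' = (i + k) mod m"
  have i'm: "i' < m" unfolding i'_def using m3 by simp
  have 1: "(A2 ^^ k) (i,q) = (i', 0)" using A2pow[OF v] k1 unfolding i'_def by simp
  have v2: "vp (i, (q + 1) mod n)" using v n3 by (simp add: vp_def)
  have "((q + 1) mod n + k * (n - 1)) mod n = ((q + k * (n - 1)) mod n + 1) mod n"
    by (simp add: mod_simps add.commute add.left_commute)
  then have "((q + 1) mod n + k * (n - 1)) mod n = 1" using k1 n3 by simp
  then have 2: "(A2 ^^ k) (i, (q + 1) mod n) = (i', 1)" using A2pow[OF v2] unfolding i'_def by simp
  have 3: "B2 (i', 0) = (i', 1)" using k2 unfolding i'_def by (simp add: B2_def sw_def)
  have "E (i,q) (i',0)" using E_A2pow[OF v, of k] 1 by simp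
  moreover have "E (i',0) (i',1)" using E_B2[of "(i',0)"] 3 i'm n3 by (simp add: vp_def)
  moreover have "E (i, (q + 1) mod n) (i', 1)" using E_A2pow[OF v2, of k] 2 by simp
  ultimately show ?thesis using E_trans E_sym by blast
qed

lemma kq:
  assumes "\<not> m dvd n" "vp (i,q)"
  shows "\<exists>k. (q + k * (n - 1)) mod n = 0 \<and> (i + k) mod m \<notin> {0,1}"
proof -
  have r: "n mod m < m" "n mod m \<noteq> 0" using assms m3 by (auto simp: dvd_eq_mod_eq_0)
  have "\<exists>j\<in>{0,1,2::nat}. ((i + q) mod m + j * (n mod m)) mod m \<notin> {0,1}"
    using three_cands[OF m3 r(1) r(2), of "(i + q) mod m"] m3 by simp
  then obtain j where j: "((i + q) mod m + j * (n mod m)) mod m \<notin> {0,1}" by blast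
  define k where "k = q + j * n"
  have "q + k * (n - 1) = n * (q + j * (n - 1))" unfolding k_def using n3
    by (cases n) (simp_all add: algebra_simps)
  then have h1: "(q + k * (n - 1)) mod n = 0" by simp
  have h2: "(i + k) mod m = ((i + q) mod m + j * (n mod m)) mod m"
    unfolding k_def by (metis add.assoc mod_add_left_eq mod_mul_in)
  show ?thesis using h1 h2 j by (intro exI[of _ k]) simp
qed

lemma ki:
  assumes "\<not> n dvd m" "vp (i,q)"
  shows "\<exists>k. (i + k) mod m = 0 \<and> (q + k * (n - 1)) mod n \<notin> {0,1}"
proof -
  have rn: "(m * (n - 1)) mod n \<noteq> 0"
  proof
    assume h: "(m * (n - 1)) mod n = 0"
    have "m * (n - 1) + m = m * n" using n3 by (cases n) (simp_all add: algebra_simps)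
    then have "(m * (n - 1) + m) mod n = 0" by simp
    then have "((m * (n - 1)) mod n + m) mod n = 0" by (simp add: mod_simps)
    then have "m mod n = 0" using h by simp
    then show False using assms by (simp add: dvd_eq_mod_eq_0)
  qed
  have r: "(m * (n - 1)) mod n < n" using n3 by simp
  have "\<exists>j\<in>{0,1,2::nat}. ((q + (m - i) * (n - 1)) mod n + j * ((m * (n - 1)) mod n)) mod n \<notin> {0,1}"
    using three_cands[OF n3 r rn, of "(q + (m - i) * (n - 1)) mod n"] n3 by simp
  then obtain j where j: "((q + (m - i) * (n - 1)) mod n + j * ((m * (n - 1)) mod n)) mod n \<notin> {0,1}" by blast
  define k where "k = (m - i) + j * m"
  have h1: "(i + k) mod m = 0" unfolding k_def using assms(2) by (simp add: vp_def)
  have "k * (n - 1) = (m - i) * (n - 1) + j * (m * (n - 1))"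
    unfolding k_def by (simp add: algebra_simps)
  then have h2: "(q + k * (n - 1)) mod n = ((q + (m - i) * (n - 1)) mod n + j * ((m * (n - 1)) mod n)) mod n"
    by (metis add.assoc mod_add_left_eq mod_mul_in)
  show ?thesis using h1 h2 j by (intro exI[of _ k]) simp
qed

lemma qchain:
  assumes "\<forall>q<n. E (i,q) (i, (q + 1) mod n)"
  shows "q < n \<Longrightarrow> E (i,0) (i,q)"
proof (induction q)
  case 0 then show ?case by (simp add: E_refl)
next
  case (Suc q)
  have "E (i,q) (i, (q + 1) mod n)" using assms[rule_format, of q] Suc.prems by simp
  then have "E (i,q) (i, Suc q)" using Suc.prems by simp
  then show ?case using Suc E_trans by simp
qed

lemma ichain:
  assumes "\<forall>i<m. E (i,q) ((i + 1) mod m, q)"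
  shows "i < m \<Longrightarrow> E (0,q) (i,q)"
proof (induction i)
  case 0 then show ?case by (simp add: E_refl)
next
  case (Suc i)
  have "E (i,q) ((i + 1) mod m, q)" using assms[rule_format, of i] Suc.prems by simp
  then have "E (i,q) (Suc i, q)" using Suc.prems by simp
  then show ?case using Suc E_trans by simp
qed

lemma kn_mod: "(k + k * (n - 1)) mod n = 0"
proof -
  have "k + k * (n - 1) = k * n" using n3 by (cases n) (simp_all add: algebra_simps)
  then show ?thesis by simp
qed

lemma pair_conn_ne:
  assumes mn: "m \<noteq> n" and v: "vp (i,q)"
  shows "E (i,q) (m - 1, 0)"
proof (cases "m dvd n")
  case False
  have allq: "\<forall>q'<n. E (i,q') (i, (q' + 1) mod n)"
  proof (intro allI impI)
    fix q' assume "q' < n"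
    then have v': "vp (i,q')" using v by (simp add: vp_def)
    from kq[OF False v'] obtain k where "(q' + k * (n - 1)) mod n = 0 \<and> (i + k) mod m \<notin> {0,1}" ..
    then show "E (i,q') (i, (q' + 1) mod n)" by (elim conjE) (rule qmove[OF v'])
  qed
  define k where "k = m - 1 - i"
  define q0 where "q0 = k mod n"
  have q0n: "q0 < n" unfolding q0_def using n3 by simp
  have qn: "q < n" using v by (simp add: vp_def)
  have "E (i,q) (i,q0)" using qchain[OF allq qn] qchain[OF allq q0n] E_sym E_trans by blast
  moreover have v0: "vp (i,q0)" using v q0n by (simp add: vp_def)
  moreover have "(A2 ^^ k) (i,q0) = (m - 1, 0)"
  proof -
    have "(i + k) mod m = m - 1" unfolding k_def using v m3 by (simp add: vp_def)
    moreover have "(q0 + k * (n - 1)) mod n = 0" unfolding q0_def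
      by (metis kn_mod mod_add_left_eq)
    ultimately show ?thesis using A2pow[OF v0] by simp
  qed
  ultimately show ?thesis using E_A2pow[OF v0, of k] E_trans by simp
next
  case True
  have nd: "\<not> n dvd m" using True mn dvd_antisym by blast
  have alli: "\<forall>i'<m. E (i',q) ((i' + 1) mod m, q)"
  proof (intro allI impI)
    fix i' assume "i' < m"
    then have v': "vp (i',q)" using v by (simp add: vp_def)
    from ki[OF nd v'] obtain k where "(i' + k) mod m = 0 \<and> (q + k * (n - 1)) mod n \<notin> {0,1}" ..
    then show "E (i',q) ((i' + 1) mod m, q)" by (elim conjE) (rule imove[OF v'])
  qed
  define i0 where "i0 = (m - 1 + (m - 1) * q) mod m"
  have i0m: "i0 < m" unfolding i0_def using m3 by simp
  have im: "i < m" using v by (simp add: vp_def)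
  have "E (i,q) (i0,q)" using ichain[OF alli im] ichain[OF alli i0m] E_sym E_trans by blast
  moreover have v0: "vp (i0,q)" using v i0m by (simp add: vp_def)
  moreover have "(A2 ^^ q) (i0,q) = (m - 1, 0)"
  proof -
    have e: "m - 1 + (m - 1) * q + q = (m - 1) + m * q" using m3 by (cases m) (simp_all add: algebra_simps)
    have "(i0 + q) mod m = (m - 1 + (m - 1) * q + q) mod m" unfolding i0_def by (simp add: mod_simps)
    also have "\<dots> = m - 1" unfolding e mod_mult_self2 using m3 by simp
    finally have "(i0 + q) mod m = m - 1" .
    moreover have "(q + q * (n - 1)) mod n = 0" by (rule kn_mod)
    ultimately show ?thesis using A2pow[OF v0] by simp
  qed
  ultimately show ?thesis using E_A2pow[OF v0, of q] E_trans by simp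
qed

lemma imove_eq:
  assumes mn: "m = n" and v: "vp (i,q)" and u: "(i + q) mod n \<notin> {0,1}"
  shows "E (i,q) ((i + 1) mod m, q)"
proof -
  have im: "i < n" using v unfolding vp_def by (simp add: mn)
  have k1: "(i + (n - i)) mod m = 0" using im mn by simp
  have "(q + (n - i) * (n - 1) + (n - i)) mod n = (q + i + (n - i)) mod n"
  proof -
    have "q + (n - i) * (n - 1) + (n - i) = q + (n - i) * (n - 1 + 1)" by (simp add: distrib_left)
    also have "n - 1 + 1 = n" using n3 by simp
    finally have "q + (n - i) * (n - 1) + (n - i) = q + (n - i) * n" .
    moreover have "q + i + (n - i) = q + n" using im by simp
    ultimately show ?thesis by simp
  qed
  then have "(q + (n - i) * (n - 1)) mod n = (q + i) mod n" by (rule mod_cancel_nat)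
  then have k2: "(q + (n - i) * (n - 1)) mod n \<notin> {0,1}" using u by (simp add: add.commute)
  show ?thesis using imove[OF v k1 k2] .
qed

lemma final_eq:
  assumes v: "vp (i,q)" and u: "(i + q) mod m = m - 1"
  shows "E (i,q) (m - 1, 0)"
proof -
  have "(A2 ^^ q) (i,q) = (m - 1, 0)" using A2pow[OF v] u kn_mod[of q] by simp
  then show ?thesis using E_A2pow[OF v, of q] by simp
qed

lemma pair_conn_eq:
  assumes mn: "m = n" and v: "vp (i,q)" and u1: "(i + q) mod n \<noteq> 1"
  shows "E (i,q) (m - 1, 0)"
proof -
  have ind: "\<forall>i. vp (i,q) \<longrightarrow> (i + q) mod n = n - 1 - d \<longrightarrow> 2 \<le> n - 1 - d \<longrightarrow> E (i,q) (m - 1, 0)" for d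
  proof (induction d)
    case 0 then show ?case using final_eq mn by auto
  next
    case (Suc d)
    show ?case
    proof (intro allI impI)
      fix i assume vi: "vp (i,q)" and ui: "(i + q) mod n = n - 1 - Suc d" and l: "2 \<le> n - 1 - Suc d"
      have "E (i,q) ((i + 1) mod m, q)" using imove_eq[OF mn vi] ui l by auto
      moreover have "vp ((i + 1) mod m, q)" using vi m3 by (simp add: vp_def)
      moreover have "((i + 1) mod m + q) mod n = n - 1 - d"
      proof -
        have "((i + 1) mod m + q) mod n = ((i + q) mod n + 1) mod n" using mn by (simp add: mod_simps add.commute add.left_commute)
        also have "\<dots> = n - 1 - d" using ui l by simp
        finally show ?thesis .
      qed
      ultimately show "E (i,q) (m - 1, 0)" using Suc.IH l E_trans by fastforce
    qed
  qed
  have ur: "(i + q) mod n < n" using n3 by simp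
  show ?thesis
  proof (cases "(i + q) mod n = 0")
    case False
    then have "2 \<le> (i + q) mod n" using u1 by simp
    then show ?thesis using ind[of "n - 1 - (i + q) mod n"] v ur by simp
  next
    case True
    define i' where "i' = (i + (n - 1)) mod n"
    have vi': "vp (i',q)" using v n3 unfolding i'_def vp_def by (simp add: mn)
    have ui': "(i' + q) mod n = n - 1"
    proof -
      have "(i' + q) mod n = (i + (n - 1) + q) mod n" unfolding i'_def by (simp add: mod_add_left_eq)
      also have "i + (n - 1) + q = (i + q) + (n - 1)" by simp
      also have "((i + q) + (n - 1)) mod n = ((i + q) mod n + (n - 1)) mod n" by (simp add: mod_add_left_eq)
      finally have "(i' + q) mod n = ((i + q) mod n + (n - 1)) mod n" .
      then show ?thesis using True n3 by simp
    qed
    have "E (i',q) ((i' + 1) mod m, q)" using imove_eq[OF mn vi'] ui' n3 by simp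
    moreover have "(i' + 1) mod m = i"
    proof -
      have "(i' + 1) mod m = (i + n) mod n" unfolding i'_def using mn n3 by (simp add: mod_simps)
      moreover have "i < n" using v unfolding vp_def by (simp add: mn)
      ultimately show ?thesis by simp
    qed
    moreover have "E (i',q) (m - 1, 0)" using final_eq[OF vi'] ui' mn by simp
    ultimately show ?thesis using E_trans E_sym by metis
  qed
qed

theorem pair_conn:
  assumes v: "vp (i,q)" and nx: "\<not> (m = n \<and> (i + q) mod n = 1)"
  shows "E (i,q) (m - 1, 0)"
  using pair_conn_ne pair_conn_eq assms by blast

end

context UU begin

definition vS :: "nat \<times> nat set \<Rightarrow> bool" where "vS y \<longleftrightarrow> fst y < m \<and> snd y \<subseteq> {..<n}"

definition Rch :: "(nat \<times> nat set) set" where "Rch = range st"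

definition pA where "pA y = pstep y a"
definition pB where "pB y = pstep y b"
definition pC where "pC y = pstep y c"

lemma st_vS: "vS (st u)"
proof -
  have "\<forall>i S. vS (i,S) \<longrightarrow> vS (foldl pstep (i,S) u)"
  proof (induction u)
    case Nil then show ?case by simp
  next
    case (Cons s u)
    show ?case
    proof (intro allI impI)
      fix i S assume "vS (i,S)"
      then have "vS (pstep (i,S) s)" unfolding vS_def pstep_def using dm_lt by auto
      then show "vS (foldl pstep (i,S) (s # u))" using Cons by (cases "pstep (i,S) s") simp
    qed
  qed
  moreover have "vS (0, {n-1})" using m3 n3 by (simp add: vS_def)
  ultimately show ?thesis unfolding st_def by blast
qed

lemma Rch_step: "y \<in> Rch \<Longrightarrow> pstep y s \<in> Rch"
proof -
  assume "y \<in> Rch"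
  then obtain u where "y = st u" unfolding Rch_def by auto
  then have "pstep y s = st (u @ [s])" unfolding st_def by simp
  then show ?thesis unfolding Rch_def by simp
qed

lemma Rch_vS: "y \<in> Rch \<Longrightarrow> vS y" unfolding Rch_def using st_vS by auto

lemma start_Rch: "(0, {n - 1}) \<in> Rch"
proof -
  have "st [] = (0, {n-1})" unfolding st_def by simp
  then show ?thesis unfolding Rch_def by (metis rangeI)
qed

lemma swn: "x < n \<Longrightarrow> sw x < n" using n3 sw_lt by simp
lemma swm: "x < m \<Longrightarrow> sw x < m" using m3 sw_lt by simp

lemma pA_eq: "pA (i,S) = ((i + 1) mod m, {q. q < n \<and> (q + 1) mod n \<in> S})"
  unfolding pA_def pstep_def by (simp add: U_delta_def)
lemma pB_eq: "pB (i,S) = (sw i, {q. q < n \<and> sw q \<in> S})"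
  unfolding pB_def pstep_def by (simp add: U_delta_def sw_def)
lemma pC_eq: "pC (i,S) = (if i = m - 1 then 0 else i, {q. q < n \<and> (if q = n - 1 then 0 else q) \<in> S})"
  unfolding pC_def pstep_def by (simp add: U_delta_def)

lemma pApow: "vS (i,S) \<Longrightarrow> (pA ^^ k) (i,S) = ((i + k) mod m, {q. q < n \<and> (q + k) mod n \<in> S})"
proof (induction k)
  case 0 then show ?case by (auto simp: vS_def)
next
  case (Suc k)
  have "(pA ^^ Suc k) (i,S) = pA ((i + k) mod m, {q. q < n \<and> (q + k) mod n \<in> S})"
    using Suc by simp
  also have "\<dots> = ((i + Suc k) mod m, {q. q < n \<and> (q + Suc k) mod n \<in> S})"
    unfolding pA_eq by (auto simp: mod_simps)
  finally show ?case .
qed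

lemma vS_pA: "vS y \<Longrightarrow> vS (pA y)" by (cases y) (simp add: pA_eq vS_def, use m3 in auto)
lemma vS_pB: "vS y \<Longrightarrow> vS (pB y)"
proof (cases y)
  case (Pair i S)
  assume "vS y"
  then have "i < m" using Pair by (simp add: vS_def)
  then have "sw i < m" using m3 sw_lt by simp
  then show ?thesis using Pair by (simp add: pB_eq vS_def subset_eq)
qed
lemma vS_pC: "vS y \<Longrightarrow> vS (pC y)" by (cases y) (simp add: pC_eq vS_def, use m3 in auto)
lemma vS_pApow: "vS y \<Longrightarrow> vS ((pA ^^ k) y)" by (induction k) (auto simp: vS_pA)

lemma pApow_id: "vS (i,S) \<Longrightarrow> (pA ^^ (m * n * j)) (i,S) = (i,S)"
proof -
  assume v: "vS (i,S)"
  have "{q. q < n \<and> (q + m * n * j) mod n \<in> S} = S"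
  proof -
    have "(q + m * n * j) mod n = q mod n" for q
      by (metis mod_mult_self1 mult.commute mult.left_commute)
    then show ?thesis using v by (auto simp: vS_def)
  qed
  moreover have "(i + m * (n * j)) mod m = i" using v by (simp add: vS_def)
  then have "(i + m * n * j) mod m = i" by (simp add: mult.assoc)
  ultimately show ?thesis using pApow[OF v] by simp
qed

definition closedP :: "(nat \<times> nat set) set \<Rightarrow> bool" where
  "closedP X \<longleftrightarrow> (\<forall>y. vS y \<longrightarrow> y \<in> X \<longrightarrow> pA y \<in> X \<and> pB y \<in> X)"
definition EP where "EP y z \<longleftrightarrow> (\<forall>X. closedP X \<longrightarrow> (y \<in> X \<longleftrightarrow> z \<in> X))"

lemma EP_sym: "EP y z \<Longrightarrow> EP z y" by (simp add: EP_def)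
lemma EP_trans: "EP y z \<Longrightarrow> EP z w \<Longrightarrow> EP y w" by (simp add: EP_def)

lemma closedP_pow: "closedP X \<Longrightarrow> vS y \<Longrightarrow> y \<in> X \<Longrightarrow> (pA ^^ k) y \<in> X"
proof (induction k)
  case 0 then show ?case by simp
next
  case (Suc k)
  have "vS ((pA ^^ k) y)" using vS_pApow Suc.prems by blast
  then have "pA ((pA ^^ k) y) \<in> X" using Suc Suc.prems unfolding closedP_def by blast
  then show ?case by simp
qed

lemma EP_pApow: assumes "vS y" shows "EP y ((pA ^^ k) y)"
  unfolding EP_def
proof (intro allI impI iffI)
  fix X assume c: "closedP X"
  { assume "y \<in> X" then show "(pA ^^ k) y \<in> X" using closedP_pow[OF c assms] by blast }
  { assume h: "(pA ^^ k) y \<in> X"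
    have "(pA ^^ ((m * n - 1) * k)) ((pA ^^ k) y) \<in> X" using closedP_pow[OF c vS_pApow[OF assms] h] .
    moreover have "(m * n - 1) * k + k = m * n * k" using m3 n3 by (cases "m * n") (simp_all add: algebra_simps)
    then have "(pA ^^ ((m * n - 1) * k)) ((pA ^^ k) y) = (pA ^^ (m * n * k)) y"
      by (metis funpow_add o_apply)
    ultimately show "y \<in> X" using pApow_id assms by (cases y) simp }
qed

lemma EP_pB: assumes "vS y" shows "EP y (pB y)"
  unfolding EP_def
proof (intro allI impI iffI)
  fix X assume c: "closedP X"
  { assume "y \<in> X" then show "pB y \<in> X" using c assms unfolding closedP_def by blast }
  { assume h: "pB y \<in> X"
    have "pB (pB y) \<in> X" using c h vS_pB[OF assms] unfolding closedP_def by blast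
    moreover have "pB (pB y) = y" using assms by (cases y) (auto simp: pB_eq vS_def swn)
    ultimately show "y \<in> X" by simp }
qed

lemma closedP_Rch: "closedP {y. vS y \<and> y \<in> Rch}"
  unfolding closedP_def pA_def pB_def
  using Rch_step vS_pA vS_pB pA_def pB_def by auto

lemma EP_Rch: "EP y z \<Longrightarrow> vS y \<Longrightarrow> vS z \<Longrightarrow> z \<in> Rch \<Longrightarrow> y \<in> Rch"
  using closedP_Rch unfolding EP_def by blast

lemma Rch_pApow: "y \<in> Rch \<Longrightarrow> (pA ^^ k) y \<in> Rch"
  by (induction k) (auto simp: pA_def Rch_step)

lemma pre_A: "q < n \<Longrightarrow> {q'. q' < n \<and> (q' + 1) mod n = q} = {(q + (n - 1)) mod n}"
proof
  assume q: "q < n"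
  show "{(q + (n - 1)) mod n} \<subseteq> {q'. q' < n \<and> (q' + 1) mod n = q}"
  proof -
    have "((q + (n - 1)) mod n + 1) mod n = (q + n) mod n" using n3 by (simp add: mod_simps)
    then show ?thesis using q n3 by simp
  qed
  show "{q'. q' < n \<and> (q' + 1) mod n = q} \<subseteq> {(q + (n - 1)) mod n}"
  proof
    fix q' assume h: "q' \<in> {q'. q' < n \<and> (q' + 1) mod n = q}"
    then have "(q + (n - 1)) mod n = ((q' + 1) mod n + (n - 1)) mod n" by simp
    also have "\<dots> = (q' + 1 + (n - 1)) mod n" by (simp add: mod_add_left_eq)
    also have "q' + 1 + (n - 1) = q' + n" using n3 by simp
    also have "(q' + n) mod n = q'" using h by simp
    finally show "q' \<in> {(q + (n - 1)) mod n}" by simp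
  qed
qed

lemma pre_B: "q < n \<Longrightarrow> {q'. q' < n \<and> sw q' = q} = {sw q}"
proof -
  assume q: "q < n"
  have "sw q' = q \<longleftrightarrow> q' = sw q" for q' by (metis sw_sw)
  then show ?thesis using swn[OF q] by auto
qed

lemma singletons: assumes v: "vp (i,q)" shows "(i,{q}) \<in> Rch"
proof -
  have im: "i < m" and qn: "q < n" using v by (simp_all add: vp_def)
  define X where "X = {s. vp s \<and> (fst s, {snd s}) \<in> Rch}"
  have cX: "closed2 X" unfolding closed2_def
  proof (intro allI impI conjI)
    fix s assume vs: "vp s" and sX: "s \<in> X"
    obtain i q where s: "s = (i,q)" by (cases s)
    have q: "q < n" using vs s by (simp add: vp_def)
    have R: "(i,{q}) \<in> Rch" using sX s by (simp add: X_def)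
    have "pA (i,{q}) = ((i + 1) mod m, {(q + (n - 1)) mod n})" using pre_A[OF q] by (simp add: pA_eq)
    then have "((i + 1) mod m, {(q + (n - 1)) mod n}) \<in> Rch" using Rch_step[OF R] by (metis pA_def)
    then show "A2 s \<in> X" using vp_A2[OF vs] s by (simp add: X_def A2_def)
    have "pB (i,{q}) = (sw i, {sw q})" using pre_B[OF q] by (simp add: pB_eq)
    then have "(sw i, {sw q}) \<in> Rch" using Rch_step[OF R] by (metis pB_def)
    then show "B2 s \<in> X" using vp_B2[OF vs] s by (simp add: X_def B2_def)
  qed
  have s0: "(0, n - 1) \<in> X" using start_Rch m3 n3 by (simp add: X_def vp_def)
  have "n - 1 \<noteq> 1" using n3 by simp
  then have "E (0, n - 1) (m - 1, 0)" using pair_conn[of 0 "n-1"] m3 n3 by (simp add: vp_def)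
  then have top: "(m - 1, 0) \<in> X" using cX s0 unfolding E_def by blast
  show ?thesis
  proof (cases "m = n \<and> (i + q) mod n = 1")
    case False
    then have "E (i,q) (m - 1, 0)" using pair_conn[OF v] by blast
    then have "(i,q) \<in> X" using cX top unfolding E_def by blast
    then show ?thesis by (simp add: X_def)
  next
    case True
    have vv: "vp (m - 1, 1)" using m3 n3 by (simp add: vp_def)
    have nx: "\<not> (m = n \<and> (m - 1 + 1) mod n = 1)" using m3 by auto
    have "E (m - 1, 1) (m - 1, 0)" using pair_conn[OF vv nx] .
    then have "(m - 1, 1) \<in> X" using cX top unfolding E_def by blast
    then have R1: "(m - 1, {1}) \<in> Rch" by (simp add: X_def)
    have "pC (m - 1, {1}) = (0, {1})" using n3 by (auto simp: pC_eq)
    then have R2: "(0, {1}) \<in> Rch" using Rch_step[OF R1] by (metis pC_def)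
    have v1: "vS (0, {1})" using m3 n3 by (simp add: vS_def)
    have "(pA ^^ i) (0, {1}) = (i mod m, {q'. q' < n \<and> (q' + i) mod n = 1})" using pApow[OF v1] by simp
    also have "i mod m = i" using im by simp
    also have "{q'. q' < n \<and> (q' + i) mod n = 1} = {q}"
    proof
      show "{q} \<subseteq> {q'. q' < n \<and> (q' + i) mod n = 1}" using True qn by (simp add: add.commute)
      show "{q'. q' < n \<and> (q' + i) mod n = 1} \<subseteq> {q}"
      proof
        fix q' assume "q' \<in> {q'. q' < n \<and> (q' + i) mod n = 1}"
        then have "q' < n" "(q' + i) mod n = (q + i) mod n" using True by (simp_all add: add.commute)
        then have "q' mod n = q mod n" using mod_cancel_nat by blast
        then show "q' \<in> {q}" using \<open>q' < n\<close> qn by simp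
      qed
    qed
    finally show ?thesis using Rch_pApow[OF R2, of i] by simp
  qed
qed

lemma level0: "i < m \<Longrightarrow> (i, {}) \<in> Rch"
proof -
  assume im: "i < m"
  have "pC (0, {n - 1}) = (0, {})" using m3 n3 by (auto simp: pC_eq)
  then have R: "(0, {}) \<in> Rch" using Rch_step[OF start_Rch] by (metis pC_def)
  have "(pA ^^ i) (0, {}) = (i, {})" using pApow[of 0 "{}" i] im by (simp add: vS_def)
  then show ?thesis using Rch_pApow[OF R, of i] by simp
qed

lemma card_pre:
  assumes fm: "\<forall>q<n. f q < n" and inj: "inj_on f {..<n}" and S: "S \<subseteq> {..<n}"
  shows "card {q. q < n \<and> f q \<in> S} = card S"
proof -
  have im: "f ` {..<n} = {..<n}" using endo_inj_surj[of "{..<n}" f] fm inj by auto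
  have "bij_betw f {q. q < n \<and> f q \<in> S} S"
    unfolding bij_betw_def
  proof
    show "inj_on f {q. q < n \<and> f q \<in> S}" using inj by (rule inj_on_subset) auto
    show "f ` {q. q < n \<and> f q \<in> S} = S"
    proof
      show "f ` {q. q < n \<and> f q \<in> S} \<subseteq> S" by auto
      show "S \<subseteq> f ` {q. q < n \<and> f q \<in> S}"
      proof
        fix x assume "x \<in> S"
        then have "x \<in> f ` {..<n}" using S im by auto
        then obtain q where "q < n" "x = f q" by auto
        then show "x \<in> f ` {q. q < n \<and> f q \<in> S}" using \<open>x \<in> S\<close> by auto
      qed
    qed
  qed
  then show ?thesis by (rule bij_betw_same_card)
qed

definition swp :: "nat \<Rightarrow> nat \<Rightarrow> nat" where
  "swp y q = (if q = y then y + 1 else if q = y + 1 then y else q)"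
definition TauT where "TauT y T = {q. q < n \<and> swp y q \<in> T}"
definition tau_i where "tau_i y i = (sw ((i + y) mod m) + (m - 1) * y) mod m"

lemma swp_swp[simp]: "swp y (swp y q) = q" by (simp add: swp_def)

lemma card_TauT: "y + 1 < n \<Longrightarrow> T \<subseteq> {..<n} \<Longrightarrow> card (TauT y T) = card T"
  unfolding TauT_def
proof (rule card_pre)
  assume y: "y + 1 < n"
  show "\<forall>q<n. swp y q < n" using y by (simp add: swp_def)
  show "inj_on (swp y) {..<n}" by (rule inj_on_inverseI[where g="swp y"]) simp
qed

lemma card_rot: "S \<subseteq> {..<n} \<Longrightarrow> card {q. q < n \<and> (q + p) mod n \<in> S} = card S"
proof (rule card_pre)
  show "\<forall>q<n. (q + p) mod n < n" using n3 by simp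
  show "inj_on (\<lambda>q. (q + p) mod n) {..<n}"
    unfolding inj_on_def
  proof (intro ballI impI)
    fix x y assume x: "x \<in> {..<n}" and y: "y \<in> {..<n}" and h: "(x + p) mod n = (y + p) mod n"
    have "x mod n = y mod n" using h by (rule mod_cancel_nat)
    then show "x = y" using x y by simp
  qed
qed

lemma mod_split_lt: "q < n \<Longrightarrow> y < n \<Longrightarrow> (q + y) mod n = (if q + y < n then q + y else q + y - n)"
  by (simp add: le_mod_geq)

lemma swp_rot: assumes "q < n" "y + 1 < n" shows "swp y ((q + y) mod n) = (sw q + y) mod n"
proof -
  consider "q = 0" | "q = 1" | "q \<ge> 2" by linarith
  then show ?thesis
  proof cases
    case 1 then show ?thesis using assms by (simp add: swp_def sw_def)
  next
    case 2 then show ?thesis using assms by (simp add: swp_def sw_def)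
  next
    case 3
    have "(q + y) mod n \<noteq> y \<and> (q + y) mod n \<noteq> y + 1"
      using mod_split_lt[OF assms(1), of y] assms 3 by auto
    then show ?thesis using 3 by (simp add: swp_def sw_def)
  qed
qed

lemma Tau_EP:
  assumes v: "vS (i,T)" and y: "y + 1 < n"
  shows "EP (i,T) (tau_i y i, TauT y T)"
proof -
  define R where "R = {q. q < n \<and> (q + y) mod n \<in> T}"
  have P1: "(pA ^^ y) (i,T) = ((i + y) mod m, R)" using pApow[OF v] unfolding R_def by simp
  have vP1: "vS ((i + y) mod m, R)" using vS_pApow[OF v, of y] P1 by simp
  have P2: "pB ((i + y) mod m, R) = (sw ((i + y) mod m), {q. q < n \<and> sw q \<in> R})" by (simp add: pB_eq)
  have vT: "vS (tau_i y i, TauT y T)" using m3 unfolding vS_def tau_i_def TauT_def by auto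
  have "(pA ^^ y) (tau_i y i, TauT y T) = ((tau_i y i + y) mod m, {q. q < n \<and> (q + y) mod n \<in> TauT y T})"
    using pApow[OF vT] by simp
  also have "(tau_i y i + y) mod m = sw ((i + y) mod m)"
  proof -
    have sm: "sw ((i + y) mod m) < m" using swm m3 by simp
    have "(tau_i y i + y) mod m = (sw ((i + y) mod m) + ((m - 1) * y + y)) mod m"
      unfolding tau_i_def by (simp add: mod_simps add.assoc)
    also have "(m - 1) * y + y = m * y" using m3 by (cases m) (simp_all add: algebra_simps)
    finally show ?thesis using sm by simp
  qed
  also have "{q. q < n \<and> (q + y) mod n \<in> TauT y T} = {q. q < n \<and> sw q \<in> R}"
  proof -
    have "(q + y) mod n \<in> TauT y T \<longleftrightarrow> sw q \<in> R" if "q < n" for q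
    proof -
      have "(q + y) mod n \<in> TauT y T \<longleftrightarrow> swp y ((q + y) mod n) \<in> T" unfolding TauT_def using n3 by simp
      also have "\<dots> \<longleftrightarrow> (sw q + y) mod n \<in> T" using swp_rot[OF that y] by simp
      also have "\<dots> \<longleftrightarrow> sw q \<in> R" unfolding R_def using swn[OF that] by simp
      finally show ?thesis .
    qed
    then show ?thesis by auto
  qed
  finally have P3: "(pA ^^ y) (tau_i y i, TauT y T) = pB ((i + y) mod m, R)" using P2 by simp
  have "EP (i,T) ((i + y) mod m, R)" using EP_pApow[OF v, of y] P1 by simp
  moreover have "EP ((i + y) mod m, R) (pB ((i + y) mod m, R))" using EP_pB[OF vP1] .
  moreover have "EP (tau_i y i, TauT y T) (pB ((i + y) mod m, R))" using EP_pApow[OF vT, of y] P3 by simp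
  ultimately show ?thesis using EP_trans EP_sym by blast
qed

lemma TauT_same: "T \<subseteq> {..<n} \<Longrightarrow> y + 1 < n \<Longrightarrow> (y \<in> T \<longleftrightarrow> y + 1 \<in> T) \<Longrightarrow> TauT y T = T"
  unfolding TauT_def swp_def by auto

lemma TauT_move: "T \<subseteq> {..<n} \<Longrightarrow> y + 1 < n \<Longrightarrow> y \<in> T \<Longrightarrow> y + 1 \<notin> T \<Longrightarrow> TauT y T = T - {y} \<union> {y + 1}"
  unfolding TauT_def swp_def by auto

lemma tau_i_lt: "tau_i y i < m" unfolding tau_i_def using m3 by simp

lemma lt3: "(q::nat) < 3 \<longleftrightarrow> q = 0 \<or> q = 1 \<or> q = 2" by auto

lemma ex3a: "{q::nat. q < 3 \<and> swp 1 q \<in> {0,2}} = {0,1}"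
  unfolding lt3 by (auto simp: swp_def)

lemma ex3b: "{q::nat. q < 3 \<and> (q + 1) mod 3 \<in> {0,1}} = {0,2}"
proof -
  have "(q::nat) < 3 \<and> (q + 1) mod 3 \<in> {0,1} \<longleftrightarrow> q = 0 \<or> q = 2" for q
    unfolding lt3 by (cases "q = 0"; cases "q = 1"; cases "q = 2"; simp)
  then show ?thesis by auto
qed

lemma level_step:
  assumes IH: "\<forall>i S. vS (i,S) \<longrightarrow> card S = k \<longrightarrow> (i,S) \<in> Rch" and k1: "1 \<le> k"
  shows "vS (i,S) \<Longrightarrow> card S = Suc k \<Longrightarrow> (i,S) \<in> Rch"
proof -
  have top: "(i,T) \<in> Rch" if v: "vS (i,T)" and cT: "card T = Suc k" and T0: "0 \<in> T" and Tn: "n - 1 \<in> T"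
    and im: "i \<noteq> m - 1" for i T
  proof -
    have Tsub: "T \<subseteq> {..<n}" using v by (simp add: vS_def)
    have fin: "finite T" using Tsub finite_subset by blast
    have "card (T - {n - 1}) = k" using cT Tn fin by simp
    moreover have "vS (i, T - {n - 1})" using v by (auto simp: vS_def)
    ultimately have R: "(i, T - {n - 1}) \<in> Rch" using IH by blast
    have "pC (i, T - {n - 1}) = (i, T)"
    proof -
      have "{q. q < n \<and> (if q = n - 1 then 0 else q) \<in> T - {n - 1}} = T"
        using Tsub T0 Tn n3 by auto
      then show ?thesis using im by (simp add: pC_eq)
    qed
    then show ?thesis using Rch_step[OF R, of c] by (simp add: pC_def)
  qed
  have top2: "(i,T) \<in> Rch" if v: "vS (i,T)" and cT: "card T = Suc k" and T0: "0 \<in> T" and Tn: "n - 1 \<in> T" for i T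
  proof (cases "i = m - 1")
    case False then show ?thesis using top that by blast
  next
    case True
    have Tsub: "T \<subseteq> {..<n}" using v by (simp add: vS_def)
    have ti: "tau_i 1 (m - 1) = 0"
    proof -
      have "(m - 1 + 1) mod m = 0" using m3 by simp
      then have "tau_i 1 (m - 1) = (1 + (m - 1)) mod m" unfolding tau_i_def by (simp add: sw_def)
      also have "\<dots> = 0" using m3 by simp
      finally show ?thesis .
    qed
    have vm: "vS (m - 1, T)" using v True by simp
    have EP1: "EP (m - 1, T) (0, TauT 1 T)" using Tau_EP[of "m-1" T 1] v True n3 ti by simp
    have vT: "vS (0, TauT 1 T)" using m3 by (auto simp: vS_def TauT_def)
    have cT': "card (TauT 1 T) = Suc k" using card_TauT[of 1 T] Tsub n3 cT by simp
    show ?thesis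
    proof (cases "n = 3")
      case False
      then have n4: "n \<ge> 4" using n3 by simp
      have "0 \<in> TauT 1 T" "n - 1 \<in> TauT 1 T" using T0 Tn n4 by (auto simp: TauT_def swp_def)
      then have "(0, TauT 1 T) \<in> Rch" using top[OF vT cT'] m3 by simp
      then show ?thesis using EP_Rch[OF EP1 vm vT] True by simp
    next
      case n3': True
      show ?thesis
      proof (cases "1 \<in> T")
        case True
        have "2 \<in> T" using Tn n3' by simp
        then have "TauT 1 T = T" using TauT_same[OF Tsub, of 1] True n3 by (simp add: numeral_2_eq_2)
        then have "(0, TauT 1 T) \<in> Rch" using top[of 0 T] v cT T0 Tn m3 by (simp add: vS_def)
        then show ?thesis using EP_Rch[OF EP1 vm vT] \<open>i = m - 1\<close> by simp
      next
        case False
        have Teq: "T = {0, 2}"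
        proof
          show "T \<subseteq> {0, 2}"
          proof
            fix x assume "x \<in> T"
            then have "x < n" using Tsub by blast
            then have x3: "x < 3" using n3' by simp
            have x1: "x \<noteq> 1" using False \<open>x \<in> T\<close> by blast
            show "x \<in> {0, 2}" using x3 x1 unfolding lt3 by blast
          qed
          show "{0, 2} \<subseteq> T" using T0 Tn n3' by simp
        qed
        have TT: "TauT 1 T = {0, 1}"
          unfolding TauT_def unfolding Teq n3' by (rule ex3a)
        have v01: "vS (0, {0,1})" using m3 n3 by (simp add: vS_def)
        have "(pA ^^ 1) (0, {0,1}) = (1, {q. q < n \<and> (q + 1) mod n \<in> {0,1}})"
          using pApow[OF v01, of 1] m3 by simp
        also have "{q. q < n \<and> (q + 1) mod n \<in> {0,1}} = T"
          unfolding Teq n3' by (rule ex3b)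
        finally have P: "(pA ^^ 1) (0, {0,1}) = (1, T)" .
        have "(1, T) \<in> Rch" using top[of 1 T] v cT T0 Tn m3 by (simp add: vS_def)
        then have "(0, {0,1}) \<in> Rch" using EP_Rch[OF EP_pApow[OF v01, of 1]] v01 vS_pApow[OF v01, of 1] P by simp
        then show ?thesis using EP_Rch[OF EP1 vm vT] TT \<open>i = m - 1\<close> by simp
      qed
    qed
  qed
  have mid: "\<forall>i T. vS (i,T) \<longrightarrow> card T = Suc k \<longrightarrow> 0 \<in> T \<longrightarrow> Max T + d = n - 1 \<longrightarrow> (i,T) \<in> Rch" for d
  proof (induction d)
    case 0
    show ?case
    proof (intro allI impI)
      fix i T assume v: "vS (i,T)" and cT: "card T = Suc k" and T0: "0 \<in> T" and M: "Max T + 0 = n - 1"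
      have fin: "finite T" using v finite_subset by (auto simp: vS_def)
      have "n - 1 \<in> T" using Max_in[OF fin] T0 M by auto
      then show "(i,T) \<in> Rch" using top2 v cT T0 by blast
    qed
  next
    case (Suc d)
    show ?case
    proof (intro allI impI)
      fix i T assume v: "vS (i,T)" and cT: "card T = Suc k" and T0: "0 \<in> T" and M: "Max T + Suc d = n - 1"
      have Tsub: "T \<subseteq> {..<n}" using v by (simp add: vS_def)
      have fin: "finite T" using Tsub finite_subset by blast
      define y where "y = Max T"
      have yT: "y \<in> T" unfolding y_def using Max_in[OF fin] T0 by auto
      have yn: "y + 1 < n" using M unfolding y_def by simp
      have y1: "y + 1 \<notin> T"
      proof
        assume "y + 1 \<in> T"
        then have "y + 1 \<le> y" using Max_ge[OF fin, of "y + 1"] unfolding y_def by simp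
        then show False by simp
      qed
      have ypos: "y \<noteq> 0"
      proof
        assume "y = 0"
        then have "T \<subseteq> {0}" using Max_ge[OF fin] unfolding y_def by auto
        then have "card T \<le> card {0::nat}" by (rule card_mono[rotated]) simp
        then have "card T \<le> 1" by simp
        then show False using cT k1 by simp
      qed
      define T' where "T' = T - {y} \<union> {y + 1}"
      have TT: "TauT y T = T'" unfolding T'_def using TauT_move[OF Tsub yn yT y1] .
      have EP1: "EP (i,T) (tau_i y i, T')" using Tau_EP[OF v yn] TT by simp
      have vT': "vS (tau_i y i, T')" using tau_i_lt Tsub yn unfolding T'_def by (auto simp: vS_def)
      have cT': "card T' = Suc k" using card_TauT[OF yn Tsub] TT cT by simp
      have T'0: "0 \<in> T'" unfolding T'_def using T0 ypos by simp
      have "Max T' = y + 1"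
      proof (rule Max_eqI)
        show "finite T'" unfolding T'_def using fin by simp
        show "y + 1 \<in> T'" unfolding T'_def by simp
        fix x assume "x \<in> T'"
        then have "x \<in> T \<or> x = y + 1" unfolding T'_def by auto
        then show "x \<le> y + 1" unfolding y_def using Max_ge[OF fin, of x] by auto
      qed
      then have "Max T' + d = n - 1" using M unfolding y_def by simp
      then have "(tau_i y i, T') \<in> Rch" using Suc.IH vT' cT' T'0 by blast
      then show "(i,T) \<in> Rch" using EP_Rch[OF EP1 v vT'] by simp
    qed
  qed
  assume v: "vS (i,S)" and cS: "card S = Suc k"
  have Ssub: "S \<subseteq> {..<n}" using v by (simp add: vS_def)
  have fin: "finite S" using Ssub finite_subset by blast
  have "S \<noteq> {}" using cS by auto
  then obtain p where pS: "p \<in> S" by blast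
  define R where "R = {q. q < n \<and> (q + p) mod n \<in> S}"
  have P: "(pA ^^ p) (i,S) = ((i + p) mod m, R)" using pApow[OF v] unfolding R_def by simp
  have vR: "vS ((i + p) mod m, R)" using vS_pApow[OF v, of p] P by simp
  have cR: "card R = Suc k" unfolding R_def using card_rot[OF Ssub] cS by simp
  have R0: "0 \<in> R" unfolding R_def using pS Ssub n3 by auto
  have Rsub: "R \<subseteq> {..<n}" unfolding R_def by auto
  have finR: "finite R" using Rsub finite_subset by blast
  have "Max R < n" using Max_in[OF finR] R0 Rsub by auto
  then have "Max R + (n - 1 - Max R) = n - 1" by simp
  then have "((i + p) mod m, R) \<in> Rch" using mid vR cR R0 by blast
  then show "(i,S) \<in> Rch" using EP_Rch[OF EP_pApow[OF v, of p]] v vR P by simp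
qed

theorem all_Rch: "vS (i,S) \<Longrightarrow> (i,S) \<in> Rch"
proof -
  have "\<forall>i S. vS (i,S) \<longrightarrow> card S = k \<longrightarrow> (i,S) \<in> Rch" for k
  proof (induction k rule: less_induct)
    case (less k)
    show ?case
    proof (intro allI impI)
      fix i S assume v: "vS (i,S)" and cS: "card S = k"
      have Ssub: "S \<subseteq> {..<n}" and im: "i < m" using v by (simp_all add: vS_def)
      have fin: "finite S" using Ssub finite_subset by blast
      consider "k = 0" | "k = 1" | "k \<ge> 2" by linarith
      then show "(i,S) \<in> Rch"
      proof cases
        case 1 then have "S = {}" using cS fin by simp
        then show ?thesis using level0 im by simp
      next
        case 2 then obtain q where "S = {q}" using cS card_1_singletonE by blast
        moreover have "q < n" using Ssub calculation by simp
        ultimately show ?thesis using singletons im by (simp add: vp_def)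
      next
        case 3
        then obtain k' where kk: "k = Suc k'" "1 \<le> k'" by (cases k) auto
        have IHk: "\<forall>i S. vS (i,S) \<longrightarrow> card S = k' \<longrightarrow> (i,S) \<in> Rch" using less[of k'] kk by simp
        show ?thesis using level_step[OF IHk kk(2) v] cS kk by simp
      qed
    qed
  qed
  then show "vS (i,S) \<Longrightarrow> (i,S) \<in> Rch" by blast
qed

end

context UU begin

lemma fdn_a: "q < n \<Longrightarrow> foldl dn q (replicate k a) = (q + k) mod n"
proof (induction k arbitrary: q)
  case 0 then show ?case by simp
next
  case (Suc k)
  have "foldl dn q (replicate (Suc k) a) = foldl dn ((q + 1) mod n) (replicate k a)"
    by (simp add: U_delta_def)
  also have "\<dots> = ((q + 1) mod n + k) mod n" using Suc.IH n3 by simp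
  also have "\<dots> = (q + Suc k) mod n" by (simp add: mod_simps)
  finally show ?case .
qed

lemma fdm_a: "q < m \<Longrightarrow> foldl dm q (replicate k a) = (q + k) mod m"
proof (induction k arbitrary: q)
  case 0 then show ?case by simp
next
  case (Suc k)
  have "foldl dm q (replicate (Suc k) a) = foldl dm ((q + 1) mod m) (replicate k a)"
    by (simp add: U_delta_def)
  also have "\<dots> = ((q + 1) mod m + k) mod m" using Suc.IH m3 by simp
  also have "\<dots> = (q + Suc k) mod m" by (simp add: mod_simps)
  finally show ?case .
qed

definition blk where "blk = replicate (n - 1) a @ [c]"

lemma round: "x < n \<Longrightarrow> foldl dn x blk = x - 1"
proof -
  assume x: "x < n"
  have "foldl dn x blk = dn ((x + (n - 1)) mod n) c" unfolding blk_def using fdn_a[OF x] by simp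
  also have "\<dots> = x - 1"
  proof (cases "x = 0")
    case True
    have "(x + (n - 1)) mod n = n - 1" using True n3 by simp
    then show ?thesis using True by (simp add: U_delta_def)
  next
    case False
    then have "(x + (n - 1)) mod n = x - 1" using x by (simp add: le_mod_geq)
    then show ?thesis using x by (simp add: U_delta_def)
  qed
  finally show ?thesis .
qed

lemma rounds: "x < n \<Longrightarrow> foldl dn x (concat (replicate k blk)) = x - k"
proof (induction k arbitrary: x)
  case 0 then show ?case by simp
next
  case (Suc k)
  have "foldl dn x (concat (replicate (Suc k) blk)) = foldl dn (foldl dn x blk) (concat (replicate k blk))"
    by simp
  also have "\<dots> = (x - 1) - k" using round[OF Suc.prems] Suc.IH Suc.prems by simp
  finally show ?case by simp
qed

definition sig where "sig z = concat (replicate (n - 1) blk) @ replicate z a"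

lemma sig_sync: "q < n \<Longrightarrow> z < n \<Longrightarrow> foldl dn q (sig z) = z"
proof -
  assume q: "q < n" and z: "z < n"
  have "foldl dn q (concat (replicate (n - 1) blk)) = 0" using rounds[OF q, of "n-1"] q by simp
  then show ?thesis unfolding sig_def using fdn_a[of 0 z] n3 z by simp
qed

lemma sync_step:
  assumes v: "vS (i,S)" and z: "z < n"
  shows "foldl pstep (i,S) (rev (sig z)) = (foldl dm i (rev (sig z)), if z \<in> S then {..<n} else {})"
proof -
  have Ss: "S \<subseteq> {..<n}" using v by (simp add: vS_def)
  have "{q. q < n \<and> foldl dn q (rev (rev (sig z))) \<in> S} = (if z \<in> S then {..<n} else {})"
    using sig_sync z by auto
  then show ?thesis using pfold[OF Ss] by simp
qed

lemma full_inv: "foldl pstep (i, {..<n}) w = (foldl dm i w, {..<n})"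
  using pfold[of "{..<n}" i w] fdn_lt by auto

lemma empty_inv: "foldl pstep (i, {}) w = (foldl dm i w, {})"
  using pfold[of "{}" i w] by auto

lemma dm_c: "x < m \<Longrightarrow> foldl dm x [c] \<noteq> m - 1"
  using m3 by (simp add: U_delta_def)

lemma dm_to_top: "x < m \<Longrightarrow> foldl dm x (replicate (m - 1 - x) a) = m - 1"
  using fdm_a m3 by simp

definition accop where "accop op y = op (fst y = m - 1) (0 \<in> snd y)"

lemma Lang_accop: "Lang op y = {w. accop op (foldl pstep y w)}"
  unfolding Lang_def accop_def by simp

lemma diffS:
  assumes vi: "vS (i,S)" and vj: "vS (j,T)" and zS: "z \<in> S" and zT: "z \<notin> T"
    and OP: "\<forall>x y. x < m \<longrightarrow> y < m \<longrightarrow> (\<exists>v. op (foldl dm x v = m - 1) True \<noteq> op (foldl dm y v = m - 1) False)"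
  shows "Lang op (i,S) \<noteq> Lang op (j,T)"
proof -
  have zn: "z < n" using vi zS by (auto simp: vS_def)
  define w1 where "w1 = rev (sig z)"
  have 1: "foldl pstep (i,S) w1 = (foldl dm i w1, {..<n})" using sync_step[OF vi zn] zS unfolding w1_def by simp
  have 2: "foldl pstep (j,T) w1 = (foldl dm j w1, {})" using sync_step[OF vj zn] zT unfolding w1_def by simp
  have im: "foldl dm i w1 < m" and jm: "foldl dm j w1 < m" using vi vj fdm_lt by (auto simp: vS_def)
  obtain v where v: "op (foldl dm (foldl dm i w1) v = m - 1) True \<noteq> op (foldl dm (foldl dm j w1) v = m - 1) False"
    using OP im jm by blast
  have "accop op (foldl pstep (i,S) (w1 @ v)) = op (foldl dm (foldl dm i w1) v = m - 1) True"
    using 1 full_inv n3 by (simp add: accop_def)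
  moreover have "accop op (foldl pstep (j,T) (w1 @ v)) = op (foldl dm (foldl dm j w1) v = m - 1) False"
    using 2 empty_inv by (simp add: accop_def)
  ultimately have "(w1 @ v \<in> Lang op (i,S)) \<noteq> (w1 @ v \<in> Lang op (j,T))" using v unfolding Lang_accop by simp
  then show ?thesis by blast
qed

lemma Ua: "U_delta k q a = (q + 1) mod k" by (simp add: U_delta_def)
lemma Ub: "U_delta k q b = sw q" by (simp add: U_delta_def sw_def)

definition Hs where
  "Hs = {s. vp s \<and> (\<exists>w. set w \<subseteq> {a, b} \<and> foldl dm (fst s) w = m - 1 \<and> foldl dn 0 (rev w) = snd s)}"

lemma back_closed2:
  assumes bA: "\<forall>s. vp s \<longrightarrow> A2 s \<in> X \<longrightarrow> s \<in> X" and bB: "\<forall>s. vp s \<longrightarrow> B2 s \<in> X \<longrightarrow> s \<in> X"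
  shows "closed2 X"
  unfolding closed2_def
proof (intro allI impI conjI)
  fix s assume vs: "vp s" and sX: "s \<in> X"
  have down: "\<forall>j. j + d = m * n \<longrightarrow> (A2 ^^ j) s \<in> X" for d
  proof (induction d)
    case 0 then show ?case using A2pow_id[OF vs] sX by simp
  next
    case (Suc d)
    show ?case
    proof (intro allI impI)
      fix j assume "j + Suc d = m * n"
      then have "Suc j + d = m * n" by simp
      then have "(A2 ^^ Suc j) s \<in> X" using Suc.IH by blast
      then have "A2 ((A2 ^^ j) s) \<in> X" by simp
      then show "(A2 ^^ j) s \<in> X" using bA vp_A2pow[OF vs] by blast
    qed
  qed
  have "1 + (m * n - 1) = m * n" using m3 n3 by simp
  then have "(A2 ^^ 1) s \<in> X" using down by blast
  then show "A2 s \<in> X" by simp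
  have "B2 (B2 s) \<in> X" using sX by (simp add: B2_def)
  then show "B2 s \<in> X" using bB vp_B2[OF vs] by blast
qed

lemma Hs_closed: "closed2 Hs"
proof (rule back_closed2; intro allI impI)
  fix s assume vs: "vp s" and h: "A2 s \<in> Hs"
  obtain i q where s: "s = (i,q)" by (cases s)
  have q: "q < n" using vs s by (simp add: vp_def)
  have As: "A2 s = ((i + 1) mod m, (q + (n - 1)) mod n)" using s by (simp add: A2_def)
  obtain w where w: "set w \<subseteq> {a,b}" "foldl dm ((i + 1) mod m) w = m - 1"
      "foldl dn 0 (rev w) = (q + (n - 1)) mod n"
    using h unfolding Hs_def mem_Collect_eq As fst_conv snd_conv by blast
  have W1: "set (a # w) \<subseteq> {a,b}" using w by simp
  have W2: "foldl dm i (a # w) = m - 1" using w(2) by (simp only: foldl_Cons Ua)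
  have W3: "foldl dn 0 (rev (a # w)) = q"
  proof -
    have "foldl dn 0 (rev (a # w)) = ((q + (n - 1)) mod n + 1) mod n" using w(3) by (simp add: Ua)
    also have "\<dots> = (q + (n - 1) + 1) mod n" by (simp add: mod_Suc_eq)
    also have "q + (n - 1) + 1 = q + n" using n3 by simp
    finally show ?thesis using q by simp
  qed
  have vs': "vp (i,q)" using vs s by simp
  show "s \<in> Hs" unfolding Hs_def mem_Collect_eq s fst_conv snd_conv using vs' W1 W2 W3 by blast
next
  fix s assume vs: "vp s" and h: "B2 s \<in> Hs"
  obtain i q where s: "s = (i,q)" by (cases s)
  have Bs: "B2 s = (sw i, sw q)" using s by (simp add: B2_def)
  obtain w where w: "set w \<subseteq> {a,b}" "foldl dm (sw i) w = m - 1" "foldl dn 0 (rev w) = sw q"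
    using h unfolding Hs_def mem_Collect_eq Bs fst_conv snd_conv by blast
  have W1: "set (b # w) \<subseteq> {a,b}" using w by simp
  have W2: "foldl dm i (b # w) = m - 1" using w(2) by (simp only: foldl_Cons Ub)
  have W3: "foldl dn 0 (rev (b # w)) = q"
  proof -
    have "foldl dn 0 (rev (b # w)) = dn (sw q) b" using w(3) by simp
    also have "\<dots> = sw (sw q)" by (simp only: Ub)
    finally show ?thesis by simp
  qed
  have vs': "vp (i,q)" using vs s by simp
  show "s \<in> Hs" unfolding Hs_def mem_Collect_eq s fst_conv snd_conv using vs' W1 W2 W3 by blast
qed

lemma Hs_top: "(m - 1, 0) \<in> Hs"
  using m3 n3 unfolding Hs_def vp_def by (auto intro!: exI[of _ "[]"])

lemma Hs_all: "vp (i,p) \<Longrightarrow> \<not> (m = n \<and> (i + p) mod n = 1) \<Longrightarrow> (i,p) \<in> Hs"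
proof -
  assume v: "vp (i,p)" and nx: "\<not> (m = n \<and> (i + p) mod n = 1)"
  have "E (i,p) (m - 1, 0)" using pair_conn[OF v nx] .
  then have "(i,p) \<in> Hs \<longleftrightarrow> (m - 1, 0) \<in> Hs" using Hs_closed unfolding E_def by blast
  then show ?thesis using Hs_top by blast
qed

lemma inj_ab: "set w \<subseteq> {a,b} \<Longrightarrow> x < m \<Longrightarrow> y < m \<Longrightarrow> foldl dm x w = foldl dm y w \<Longrightarrow> x = y"
proof (induction w arbitrary: x y)
  case Nil then show ?case by simp
next
  case (Cons s w)
  have sw': "set w \<subseteq> {a,b}" and sab: "s = a \<or> s = b" using Cons.prems(1) by auto
  have "foldl dm (dm x s) w = foldl dm (dm y s) w" using Cons.prems(4) by simp
  then have h: "dm x s = dm y s" using Cons.IH[OF sw' dm_lt[OF Cons.prems(2)] dm_lt[OF Cons.prems(3)]] by blast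
  show ?case
  proof (cases "s = a")
    case True
    then have "(x + 1) mod m = (y + 1) mod m" using h by (simp add: U_delta_def)
    then have "x mod m = y mod m" by (rule mod_cancel_nat)
    then show "x = y" using Cons.prems by simp
  next
    case False
    then have "s = b" using sab by simp
    then have "sw x = sw y" using h by (simp add: U_delta_def sw_def)
    then show "x = y" by (metis sw_sw)
  qed
qed

lemma U2:
  assumes im: "i < m" and jm: "j < m" and ij: "i \<noteq> j" and pn: "p < n"
  shows "\<exists>w. foldl dn 0 (rev w) = p \<and> ((foldl dm i w = m - 1 \<and> foldl dm j w \<noteq> m - 1)
          \<or> (foldl dm j w = m - 1 \<and> foldl dm i w \<noteq> m - 1))"
proof -
  have gen: "\<exists>w. foldl dn 0 (rev w) = p \<and> foldl dm x w = m - 1 \<and> foldl dm y w \<noteq> m - 1"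
    if xm: "x < m" and ym: "y < m" and xy: "x \<noteq> y" and nx: "\<not> (m = n \<and> (x + p) mod n = 1)" for x y
  proof -
    have "(x,p) \<in> Hs" using Hs_all nx xm pn by (simp add: vp_def)
    then obtain w where w: "set w \<subseteq> {a,b}" "foldl dm x w = m - 1" "foldl dn 0 (rev w) = p"
      unfolding Hs_def by auto
    have "foldl dm y w \<noteq> m - 1" using inj_ab[OF w(1) xm ym] w(2) xy by auto
    then show ?thesis using w by blast
  qed
  show ?thesis
  proof (cases "m = n \<and> (i + p) mod n = 1")
    case False then show ?thesis using gen[OF im jm ij] by blast
  next
    case True
    have "\<not> (m = n \<and> (j + p) mod n = 1)"
    proof
      assume "m = n \<and> (j + p) mod n = 1"
      then have "(i + p) mod n = (j + p) mod n" using True by simp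
      then have "(p + i) mod n = (p + j) mod n" by (simp add: add.commute)
      then have "i mod n = j mod n" using mod_cancel_nat[of i p n j] by (simp add: add.commute)
      then show False using True im jm ij by simp
    qed
    then show ?thesis using gen[OF jm im ij[symmetric]] by blast
  qed
qed

lemma sameS:
  assumes vi: "vS (i,S)" and jm: "j < m" and ij: "i \<noteq> j"
    and s0: "op True s0 \<noteq> op False s0" and pn: "p < n" and ps: "(p \<in> S) = s0"
  shows "Lang op (i,S) \<noteq> Lang op (j,S)"
proof -
  have im: "i < m" and Ss: "S \<subseteq> {..<n}" using vi by (simp_all add: vS_def)
  obtain w where w: "foldl dn 0 (rev w) = p" and
    ww: "(foldl dm i w = m - 1 \<and> foldl dm j w \<noteq> m - 1) \<or> (foldl dm j w = m - 1 \<and> foldl dm i w \<noteq> m - 1)"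
    using U2[OF im jm ij pn] by blast
  have "0 \<in> {q. q < n \<and> foldl dn q (rev w) \<in> S} \<longleftrightarrow> s0" using w ps n3 by simp
  then have "accop op (foldl pstep (i,S) w) = op (foldl dm i w = m - 1) s0"
    and "accop op (foldl pstep (j,S) w) = op (foldl dm j w = m - 1) s0"
    using pfold[OF Ss] by (simp_all add: accop_def)
  then have "(w \<in> Lang op (i,S)) \<noteq> (w \<in> Lang op (j,S))" using ww s0 unfolding Lang_accop by auto
  then show ?thesis by blast
qed

definition VV where "VV = {y. vS y}"

lemma VV_eq: "VV = {..<m} \<times> Pow {..<n}"
  unfolding VV_def vS_def by auto

lemma fin_VV: "finite VV" unfolding VV_eq by simp

lemma card_VV: "card VV = m * 2 ^ n"
  unfolding VV_eq by (simp add: card_cartesian_product card_Pow)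

lemma range_quot: "range (quot (Lop op)) = Lang op ` VV"
proof
  show "range (quot (Lop op)) \<subseteq> Lang op ` VV"
    using quot_Lop st_vS unfolding VV_def by auto
  show "Lang op ` VV \<subseteq> range (quot (Lop op))"
  proof
    fix L assume "L \<in> Lang op ` VV"
    then obtain y where y: "y \<in> VV" "L = Lang op y" by blast
    then have "y \<in> Rch" using all_Rch unfolding VV_def by (cases y) auto
    then obtain u where "y = st u" unfolding Rch_def by blast
    then show "L \<in> range (quot (Lop op))" using y quot_Lop by auto
  qed
qed

lemma sc_Lop: "state_complexity (Lop op) = card (Lang op ` VV)"
  using sc_eq[of "Lop op"] range_quot fin_VV by simp

lemma count_bad:
  assumes Sb: "Sb \<subseteq> {..<n}"
    and ch: "\<forall>y\<in>VV. \<forall>z\<in>VV. f y = f z \<longleftrightarrow> y = z \<or> (snd y = Sb \<and> snd z = Sb)"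
  shows "card (f ` VV) = m * 2 ^ n - (m - 1)"
proof -
  define B where "B = {1..<m} \<times> {Sb}"
  define V' where "V' = VV - B"
  have BV: "B \<subseteq> VV" unfolding B_def VV_eq using Sb by auto
  have im: "f ` VV = f ` V'"
  proof
    show "f ` V' \<subseteq> f ` VV" unfolding V'_def by auto
    show "f ` VV \<subseteq> f ` V'"
    proof
      fix x assume "x \<in> f ` VV"
      then obtain y where y: "y \<in> VV" "x = f y" by blast
      show "x \<in> f ` V'"
      proof (cases "y \<in> B")
        case False then show ?thesis using y unfolding V'_def by auto
      next
        case True
        then have ys: "snd y = Sb" unfolding B_def by auto
        have 0: "(0, Sb) \<in> V'" unfolding V'_def B_def VV_eq using Sb m3 by auto
        then have "f y = f (0, Sb)" using ch y ys unfolding V'_def by auto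
        then show ?thesis using 0 y by auto
      qed
    qed
  qed
  have inj: "inj_on f V'"
  proof (rule inj_onI)
    fix y z assume y: "y \<in> V'" and z: "z \<in> V'" and e: "f y = f z"
    then have "y = z \<or> (snd y = Sb \<and> snd z = Sb)" using ch unfolding V'_def by auto
    moreover have "snd y = Sb \<Longrightarrow> fst y = 0" "snd z = Sb \<Longrightarrow> fst z = 0"
      using y z unfolding V'_def B_def VV_eq by (cases y, auto; cases z, auto)+
    ultimately show "y = z" by (cases y, cases z) auto
  qed
  have "card B = m - 1" unfolding B_def by simp
  then have "card V' = m * 2 ^ n - (m - 1)" unfolding V'_def using card_Diff_subset[OF _ BV] fin_VV card_VV finite_subset[OF BV] by simp
  then show ?thesis using im card_image[OF inj] by simp
qed

lemma count_inj:
  assumes "inj_on f VV" shows "card (f ` VV) = m * 2 ^ n"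
  using card_image[OF assms] card_VV by simp

lemma char_gen:
  assumes OP: "\<forall>x y. x < m \<longrightarrow> y < m \<longrightarrow> (\<exists>v. op (foldl dm x v = m - 1) True \<noteq> op (foldl dm y v = m - 1) False)"
    and S0: "\<forall>S. S \<subseteq> {..<n} \<longrightarrow> \<not> Bad S \<longrightarrow> (\<exists>s0 p. op True s0 \<noteq> op False s0 \<and> p < n \<and> (p \<in> S) = s0)"
    and bad: "\<forall>y\<in>VV. \<forall>z\<in>VV. Bad (snd y) \<longrightarrow> Bad (snd z) \<longrightarrow> Lang op y = Lang op z"
  shows "\<forall>y\<in>VV. \<forall>z\<in>VV. Lang op y = Lang op z \<longleftrightarrow> y = z \<or> (Bad (snd y) \<and> Bad (snd z))"
proof (intro ballI iffI)
  fix y z assume y: "y \<in> VV" and z: "z \<in> VV"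
  { assume "y = z \<or> (Bad (snd y) \<and> Bad (snd z))"
    then show "Lang op y = Lang op z" using bad y z by auto }
  { assume e: "Lang op y = Lang op z"
    obtain i S where yy: "y = (i,S)" by (cases y)
    obtain j T where zz: "z = (j,T)" by (cases z)
    have vy: "vS (i,S)" and vz: "vS (j,T)" using y z yy zz unfolding VV_def by auto
    have ST: "S = T"
    proof (rule ccontr)
      assume "S \<noteq> T"
      then obtain q where "(q \<in> S \<and> q \<notin> T) \<or> (q \<in> T \<and> q \<notin> S)" by blast
      then show False
      proof
        assume "q \<in> S \<and> q \<notin> T"
        then show False using diffS[OF vy vz _ _ OP] e yy zz by blast
      next
        assume "q \<in> T \<and> q \<notin> S"
        then show False using diffS[OF vz vy _ _ OP] e yy zz by metis
      qed
    qed
    show "y = z \<or> (Bad (snd y) \<and> Bad (snd z))"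
    proof (cases "i = j")
      case True then show ?thesis using yy zz ST by simp
    next
      case False
      show ?thesis
      proof (cases "Bad S")
        case True then show ?thesis using yy zz ST by simp
      next
        case nb: False
        have Ss: "S \<subseteq> {..<n}" and jm: "j < m" using vy vz ST by (simp_all add: vS_def)
        obtain s0 p where sp: "op True s0 \<noteq> op False s0" "p < n" "(p \<in> S) = s0" using S0 Ss nb by blast
        have "Lang op (i,S) \<noteq> Lang op (j,S)" using sameS[of i S j op s0 p, OF vy jm False sp] .
        then show ?thesis using e yy zz ST by simp
      qed
    qed }
qed

lemma Lang_full: "Lang op (i, {..<n}) = {w. op (foldl dm i w = m - 1) True}"
  unfolding Lang_def using full_inv n3 by simp
lemma Lang_empty: "Lang op (i, {}) = {w. op (foldl dm i w = m - 1) False}"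
  unfolding Lang_def using empty_inv by simp

end

context UU begin

lemma sc_union: "state_complexity (U_lang m \<union> lang_rev (U_lang n)) = m * 2 ^ n - (m - 1)"
proof -
  define op where "op = (\<lambda>x y. x \<or> y)"
  have L: "U_lang m \<union> lang_rev (U_lang n) = Lop op" unfolding Lop_def op_def by auto
  have ch: "\<forall>y\<in>VV. \<forall>z\<in>VV. Lang op y = Lang op z \<longleftrightarrow> y = z \<or> (snd y = {..<n} \<and> snd z = {..<n})"
  proof (rule char_gen)
    show "\<forall>x y. x < m \<longrightarrow> y < m \<longrightarrow> (\<exists>v. op (foldl dm x v = m - 1) True \<noteq> op (foldl dm y v = m - 1) False)"
      using dm_c unfolding op_def by blast
    show "\<forall>S. S \<subseteq> {..<n} \<longrightarrow> \<not> S = {..<n} \<longrightarrow> (\<exists>s0 p. op True s0 \<noteq> op False s0 \<and> p < n \<and> (p \<in> S) = s0)"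
      unfolding op_def by blast
    show "\<forall>y\<in>VV. \<forall>z\<in>VV. snd y = {..<n} \<longrightarrow> snd z = {..<n} \<longrightarrow> Lang op y = Lang op z"
    proof (intro ballI impI)
      fix y z :: "nat \<times> nat set" assume "snd y = {..<n}" "snd z = {..<n}"
      then show "Lang op y = Lang op z" using Lang_full[of op "fst y"] Lang_full[of op "fst z"]
        unfolding op_def by (cases y, cases z) simp
    qed
  qed
  have "card (Lang op ` VV) = m * 2 ^ n - (m - 1)" by (rule count_bad[OF _ ch]) simp
  then show ?thesis using sc_Lop L by simp
qed

lemma sc_inter: "state_complexity (U_lang m \<inter> lang_rev (U_lang n)) = m * 2 ^ n - (m - 1)"
proof -
  define op where "op = (\<lambda>x y. x \<and> y)"
  have L: "U_lang m \<inter> lang_rev (U_lang n) = Lop op" unfolding Lop_def op_def by auto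
  have ch: "\<forall>y\<in>VV. \<forall>z\<in>VV. Lang op y = Lang op z \<longleftrightarrow> y = z \<or> (snd y = {} \<and> snd z = {})"
  proof (rule char_gen)
    show "\<forall>x y. x < m \<longrightarrow> y < m \<longrightarrow> (\<exists>v. op (foldl dm x v = m - 1) True \<noteq> op (foldl dm y v = m - 1) False)"
      using dm_to_top unfolding op_def by blast
    show "\<forall>S. S \<subseteq> {..<n} \<longrightarrow> \<not> S = {} \<longrightarrow> (\<exists>s0 p. op True s0 \<noteq> op False s0 \<and> p < n \<and> (p \<in> S) = s0)"
      unfolding op_def by blast
    show "\<forall>y\<in>VV. \<forall>z\<in>VV. snd y = {} \<longrightarrow> snd z = {} \<longrightarrow> Lang op y = Lang op z"
    proof (intro ballI impI)
      fix y z :: "nat \<times> nat set" assume "snd y = {}" "snd z = {}"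
      then show "Lang op y = Lang op z" using Lang_empty[of op "fst y"] Lang_empty[of op "fst z"]
        unfolding op_def by (cases y, cases z) simp
    qed
  qed
  have "card (Lang op ` VV) = m * 2 ^ n - (m - 1)" by (rule count_bad[OF _ ch]) simp
  then show ?thesis using sc_Lop L by simp
qed

lemma sc_diff1: "state_complexity (U_lang m - lang_rev (U_lang n)) = m * 2 ^ n - (m - 1)"
proof -
  define op where "op = (\<lambda>x y. x \<and> \<not> y)"
  have L: "U_lang m - lang_rev (U_lang n) = Lop op" unfolding Lop_def op_def by auto
  have ch: "\<forall>y\<in>VV. \<forall>z\<in>VV. Lang op y = Lang op z \<longleftrightarrow> y = z \<or> (snd y = {..<n} \<and> snd z = {..<n})"
  proof (rule char_gen)
    show "\<forall>x y. x < m \<longrightarrow> y < m \<longrightarrow> (\<exists>v. op (foldl dm x v = m - 1) True \<noteq> op (foldl dm y v = m - 1) False)"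
      using dm_to_top unfolding op_def by blast
    show "\<forall>S. S \<subseteq> {..<n} \<longrightarrow> \<not> S = {..<n} \<longrightarrow> (\<exists>s0 p. op True s0 \<noteq> op False s0 \<and> p < n \<and> (p \<in> S) = s0)"
      unfolding op_def by blast
    show "\<forall>y\<in>VV. \<forall>z\<in>VV. snd y = {..<n} \<longrightarrow> snd z = {..<n} \<longrightarrow> Lang op y = Lang op z"
    proof (intro ballI impI)
      fix y z :: "nat \<times> nat set" assume "snd y = {..<n}" "snd z = {..<n}"
      then show "Lang op y = Lang op z" using Lang_full[of op "fst y"] Lang_full[of op "fst z"]
        unfolding op_def by (cases y, cases z) simp
    qed
  qed
  have "card (Lang op ` VV) = m * 2 ^ n - (m - 1)" by (rule count_bad[OF _ ch]) simp
  then show ?thesis using sc_Lop L by simp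
qed

lemma sc_diff2: "state_complexity (lang_rev (U_lang n) - U_lang m) = m * 2 ^ n - (m - 1)"
proof -
  define op where "op = (\<lambda>x y. y \<and> \<not> x)"
  have L: "lang_rev (U_lang n) - U_lang m = Lop op" unfolding Lop_def op_def by auto
  have ch: "\<forall>y\<in>VV. \<forall>z\<in>VV. Lang op y = Lang op z \<longleftrightarrow> y = z \<or> (snd y = {} \<and> snd z = {})"
  proof (rule char_gen)
    show "\<forall>x y. x < m \<longrightarrow> y < m \<longrightarrow> (\<exists>v. op (foldl dm x v = m - 1) True \<noteq> op (foldl dm y v = m - 1) False)"
      using dm_c unfolding op_def by blast
    show "\<forall>S. S \<subseteq> {..<n} \<longrightarrow> \<not> S = {} \<longrightarrow> (\<exists>s0 p. op True s0 \<noteq> op False s0 \<and> p < n \<and> (p \<in> S) = s0)"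
      unfolding op_def by blast
    show "\<forall>y\<in>VV. \<forall>z\<in>VV. snd y = {} \<longrightarrow> snd z = {} \<longrightarrow> Lang op y = Lang op z"
    proof (intro ballI impI)
      fix y z :: "nat \<times> nat set" assume "snd y = {}" "snd z = {}"
      then show "Lang op y = Lang op z" using Lang_empty[of op "fst y"] Lang_empty[of op "fst z"]
        unfolding op_def by (cases y, cases z) simp
    qed
  qed
  have "card (Lang op ` VV) = m * 2 ^ n - (m - 1)" by (rule count_bad[OF _ ch]) simp
  then show ?thesis using sc_Lop L by simp
qed

lemma sc_xor: "state_complexity ((U_lang m - lang_rev (U_lang n)) \<union> (lang_rev (U_lang n) - U_lang m)) = m * 2 ^ n"
proof -
  define op :: "bool \<Rightarrow> bool \<Rightarrow> bool" where "op = (\<lambda>x y. x \<noteq> y)"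
  have L: "(U_lang m - lang_rev (U_lang n)) \<union> (lang_rev (U_lang n) - U_lang m) = Lop op" unfolding Lop_def op_def by auto
  have ch: "\<forall>y\<in>VV. \<forall>z\<in>VV. Lang op y = Lang op z \<longleftrightarrow> y = z \<or> (False \<and> False)"
  proof (rule char_gen[where Bad = "\<lambda>S. False"])
    show "\<forall>x y. x < m \<longrightarrow> y < m \<longrightarrow> (\<exists>v. op (foldl dm x v = m - 1) True \<noteq> op (foldl dm y v = m - 1) False)"
      using dm_c unfolding op_def by blast
    show "\<forall>S. S \<subseteq> {..<n} \<longrightarrow> \<not> False \<longrightarrow> (\<exists>s0 p. op True s0 \<noteq> op False s0 \<and> p < n \<and> (p \<in> S) = s0)"
    proof (intro allI impI)
      fix S :: "nat set" assume "S \<subseteq> {..<n}"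
      show "\<exists>s0 p. op True s0 \<noteq> op False s0 \<and> p < n \<and> (p \<in> S) = s0"
        using n3 unfolding op_def by (intro exI[of _ "0 \<in> S"] exI[of _ 0]) auto
    qed
  qed simp
  then have "inj_on (Lang op) VV" unfolding inj_on_def by blast
  then have "card (Lang op ` VV) = m * 2 ^ n" by (rule count_inj)
  then show ?thesis using sc_Lop L by simp
qed

end

theorem theorem2:
  fixes m n :: nat
  assumes "m \<ge> 3" and "n \<ge> 3"
  shows "state_complexity (U_lang m \<union> lang_rev (U_lang n)) = m * 2 ^ n - (m - 1)
    \<and> state_complexity (U_lang m \<inter> lang_rev (U_lang n)) = m * 2 ^ n - (m - 1)
    \<and> state_complexity (U_lang m - lang_rev (U_lang n)) = m * 2 ^ n - (m - 1)
    \<and> state_complexity (lang_rev (U_lang n) - U_lang m) = m * 2 ^ n - (m - 1)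
    \<and> state_complexity ((U_lang m - lang_rev (U_lang n)) \<union> (lang_rev (U_lang n) - U_lang m))
        = m * 2 ^ n"
proof -
  interpret UU m n using assms by unfold_locales
  show ?thesis using sc_union sc_inter sc_diff1 sc_diff2 sc_xor by blast
qed


end
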